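(* Let $\varepsilon\in(0,1/2)$ and let $V_N=\mathbb Z/p_N\mathbb Z$ with $p_N\ge3$. The family $\mathcal Q(\varepsilon)=\{Q_\delta:\delta\in[-\varepsilon,\varepsilon]\}$ is $\frac{1+2\varepsilon}{1-2\varepsilon}$-stable with respect to any probability measure $\mu_0\in\mathcal S_N(\varepsilon)$.
   Context: $Q$ is the simple random walk kernel on $V_N=\mathbb Z/p_N\mathbb Z$: $Q(x,y)=1/2$ if $y=x\pm1$ and $0$ otherwise. For $\delta\in(-1/2,1/2)$, $Q_\delta=Q+\Delta_\delta$ where $\Delta_\delta(0,1)=\delta$, $\Delta_\delta(0,-1)=-\delta$ and $\Delta_\delta(x,y)=0$ otherwise. $\mathcal S_N(\varepsilon)$ is the set of probability measures $\mu$ on $V_N$ of the form $\mu(x)=1/p_N+a_{\mu,x}$ with $a_{\mu,x}=-a_{\mu,-x}$ and $|a_{\mu,x}|\le2\varepsilon/p_N$ for all $x\in V_N$. A family $\mathcal Q$ of Markov kernels is $c$-stable with respect to $\mu_0$ if for every sequence $(K_i)_{i\ge1}$ with all $K_i\in\mathcal Q$, setting $\mu_n=\mu_0K_1\cdots K_n$, one has $c^{-1}\le\mu_n(x)/\mu_0(x)\le c$ for all $n\ge0$, $x$. *)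

theory Defs
  imports Complex_Main
begin

text \<open>The vertex set V_N = Z/pZ is represented by the naturals {0..<p},
  with arithmetic modulo p. Markov kernels and measures are real-valued
  functions; only their values on {0..<p} matter.\<close>

type_synonym kernel = "nat \<Rightarrow> nat \<Rightarrow> real"
type_synonym measure_fn = "nat \<Rightarrow> real"

definition succ_mod :: "nat \<Rightarrow> nat \<Rightarrow> nat" where
  "succ_mod p x = (x + 1) mod p"

definition pred_mod :: "nat \<Rightarrow> nat \<Rightarrow> nat" where
  "pred_mod p x = (x + p - 1) mod p"

definition neg_mod :: "nat \<Rightarrow> nat \<Rightarrow> nat" where
  "neg_mod p x = (p - x) mod p"

definition Q_srw :: "nat \<Rightarrow> kernel" where
  "Q_srw p x y = (if y = succ_mod p x \<or> y = pred_mod p x then 1/2 else 0)"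

definition Delta :: "nat \<Rightarrow> real \<Rightarrow> kernel" where
  "Delta p \<delta> x y =
     (if x = 0 \<and> y = succ_mod p 0 then \<delta> else 0)
   + (if x = 0 \<and> y = pred_mod p 0 then - \<delta> else 0)"

definition Q_delta :: "nat \<Rightarrow> real \<Rightarrow> kernel" where
  "Q_delta p \<delta> x y = Q_srw p x y + Delta p \<delta> x y"

definition Qfam :: "nat \<Rightarrow> real \<Rightarrow> kernel set" where
  "Qfam p \<epsilon> = {Q_delta p \<delta> | \<delta>. \<delta> \<in> {-\<epsilon>..\<epsilon>}}"

definition act :: "nat \<Rightarrow> measure_fn \<Rightarrow> kernel \<Rightarrow> measure_fn" where
  "act p \<mu> K y = (\<Sum>x<p. \<mu> x * K x y)"

fun evol :: "nat \<Rightarrow> measure_fn \<Rightarrow> (nat \<Rightarrow> kernel) \<Rightarrow> nat \<Rightarrow> measure_fn" where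
  "evol p \<mu>0 Ks 0 = \<mu>0"
| "evol p \<mu>0 Ks (Suc n) = act p (evol p \<mu>0 Ks n) (Ks (Suc n))"

definition prob_measure_on :: "nat \<Rightarrow> measure_fn \<Rightarrow> bool" where
  "prob_measure_on p \<mu> \<longleftrightarrow> (\<forall>x<p. 0 \<le> \<mu> x) \<and> (\<Sum>x<p. \<mu> x) = 1"

definition S_N :: "nat \<Rightarrow> real \<Rightarrow> measure_fn set" where
  "S_N p \<epsilon> = {\<mu>. prob_measure_on p \<mu> \<and>
      (\<forall>x<p. \<mu> x - 1 / real p = - (\<mu> (neg_mod p x) - 1 / real p)) \<and>
      (\<forall>x<p. \<bar>\<mu> x - 1 / real p\<bar> \<le> 2 * \<epsilon> / real p)}"

definition stable :: "nat \<Rightarrow> real \<Rightarrow> kernel set \<Rightarrow> measure_fn \<Rightarrow> bool" where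
  "stable p c Qs \<mu>0 \<longleftrightarrow>
     (\<forall>Ks. (\<forall>i\<ge>1. Ks i \<in> Qs) \<longrightarrow>
        (\<forall>n x. x < p \<longrightarrow> 1 / c \<le> evol p \<mu>0 Ks n x / \<mu>0 x
                        \<and> evol p \<mu>0 Ks n x / \<mu>0 x \<le> c))"

end

theory Submission
  imports Defs
begin

lemma succ_eq: "x < p \<Longrightarrow> succ_mod p x = (if x = p - 1 then 0 else x + 1)"
  unfolding succ_mod_def by (auto simp: mod_if)
lemma pred_eq: "y < p \<Longrightarrow> pred_mod p y = (if y = 0 then p - 1 else y - 1)"
  unfolding pred_mod_def
  by (cases "y = 0") (auto simp: mod_if)
lemma neg_eq: "x < p \<Longrightarrow> neg_mod p x = (if x = 0 then 0 else p - x)"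
  unfolding neg_mod_def by (auto simp: mod_if)

lemma Q_srw_alt:
  assumes "x < p" "y < p" "p \<ge> 3"
  shows "Q_srw p x y = (if x = pred_mod p y then 1/2 else 0) + (if x = succ_mod p y then 1/2 else 0)"
  using assms unfolding Q_srw_def by (auto simp: succ_eq pred_eq split: if_splits; arith)

lemma sum_Q:
  assumes "y < p" "p \<ge> 3"
  shows "(\<Sum>x<p. \<mu> x * Q_srw p x y) = (\<mu> (pred_mod p y) + \<mu> (succ_mod p y)) / 2"
proof -
  have "(\<Sum>x<p. \<mu> x * Q_srw p x y) = (\<Sum>x<p. (if x = pred_mod p y then \<mu> x / 2 else 0) + (if x = succ_mod p y then \<mu> x / 2 else 0))"
    by (rule sum.cong) (use assms in \<open>auto simp: Q_srw_alt\<close>)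
  also have "\<dots> = \<mu> (pred_mod p y) / 2 + \<mu> (succ_mod p y) / 2"
    using assms by (simp add: sum.distrib pred_mod_def succ_mod_def)
  finally show ?thesis by simp
qed

lemma sum_Delta:
  assumes "p \<ge> 3"
  shows "(\<Sum>x<p. \<mu> x * Delta p \<delta> x y) = \<mu> 0 * ((if y = 1 then \<delta> else 0) - (if y = p - 1 then \<delta> else 0))"
proof -
  have "(\<Sum>x<p. \<mu> x * Delta p \<delta> x y) = (\<Sum>x<p. if x = 0 then \<mu> 0 * ((if y = 1 then \<delta> else 0) - (if y = p - 1 then \<delta> else 0)) else 0)"
    by (rule sum.cong) (use assms in \<open>auto simp: Delta_def succ_eq pred_eq\<close>)
  also have "\<dots> = \<mu> 0 * ((if y = 1 then \<delta> else 0) - (if y = p - 1 then \<delta> else 0))" using assms by simp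
  finally show ?thesis .
qed

definition invS :: "nat \<Rightarrow> real \<Rightarrow> measure_fn \<Rightarrow> bool" where
  "invS p \<epsilon> \<mu> \<longleftrightarrow> (\<forall>x<p. \<mu> x - 1 / real p = - (\<mu> (neg_mod p x) - 1 / real p)) \<and>
      (\<forall>x<p. \<bar>\<mu> x - 1 / real p\<bar> \<le> 2 * \<epsilon> / real p)"

lemma act_formula:
  assumes "y < p" "p \<ge> 3"
  shows "act p \<mu> (Q_delta p \<delta>) y = (\<mu> (pred_mod p y) + \<mu> (succ_mod p y)) / 2
     + \<mu> 0 * ((if y = 1 then \<delta> else 0) - (if y = p - 1 then \<delta> else 0))"
  unfolding act_def Q_delta_def
  by (simp add: distrib_left sum.distrib sum_Q[OF assms] sum_Delta[OF assms(2)])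

lemma step:
  assumes inv: "invS p \<epsilon> \<mu>" and d: "\<bar>\<delta>\<bar> \<le> \<epsilon>" and p: "p \<ge> 3"
  shows "invS p \<epsilon> (act p \<mu> (Q_delta p \<delta>))"
proof -
  define c where "c = 1 / real p"
  have c: "c > 0" using p by (simp add: c_def)
  define a where "a z = \<mu> z - c" for z
  have anti: "\<And>z. z < p \<Longrightarrow> a (neg_mod p z) = - a z"
    using inv unfolding invS_def a_def c_def by force
  have bnd: "\<And>z. z < p \<Longrightarrow> \<bar>a z\<bar> \<le> 2 * \<epsilon> * c"
    using inv unfolding invS_def a_def c_def by force
  have a0: "a 0 = 0" using anti[of 0] p by (simp add: neg_eq)
  have m0: "\<mu> 0 = c" using a0 by (simp add: a_def)
  have dc: "\<bar>\<delta> * c\<bar> \<le> \<epsilon> * c" using d c by (simp add: abs_mult mult_right_mono)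
  define \<nu> where "\<nu> = act p \<mu> (Q_delta p \<delta>)"
  have nu: "\<nu> y - c = (a (pred_mod p y) + a (succ_mod p y)) / 2
     + ((if y = 1 then \<delta> * c else 0) - (if y = p - 1 then \<delta> * c else 0))" if "y < p" for y
    using act_formula[OF that p, of \<mu> \<delta>] m0 unfolding \<nu>_def a_def
    by (auto simp: field_simps)
  have "\<nu> y - c = - (\<nu> (neg_mod p y) - c)" if y: "y < p" for y
  proof -
    have ny: "neg_mod p y < p" using y by (simp add: neg_eq)
    have e1: "pred_mod p (neg_mod p y) = neg_mod p (succ_mod p y)"
      using y p by (simp add: neg_eq pred_eq succ_eq)
    have e2: "succ_mod p (neg_mod p y) = neg_mod p (pred_mod p y)"
      using y p by (simp add: neg_eq pred_eq succ_eq; arith)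
    have e3: "(neg_mod p y = 1) = (y = p - 1)" "(neg_mod p y = p - 1) = (y = 1)"
      using y p by (auto simp: neg_eq)
    have sp: "succ_mod p y < p" "pred_mod p y < p" using y p by (auto simp: succ_eq pred_eq)
    have "p - 1 \<noteq> 1" using p by simp
    then show ?thesis
      using nu[OF y] nu[OF ny] e1 e2 e3 anti[OF sp(1)] anti[OF sp(2)]
      by (auto simp: field_simps)
  qed
  moreover have "\<bar>\<nu> y - c\<bar> \<le> 2 * \<epsilon> * c" if y: "y < p" for y
  proof -
    have sp: "succ_mod p y < p" "pred_mod p y < p" using y p by (auto simp: succ_eq pred_eq)
    note b1 = bnd[OF sp(1)] and b2 = bnd[OF sp(2)]
    consider "y = 1" | "y = p - 1" | "y \<noteq> 1" "y \<noteq> p - 1" by blast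
    then show ?thesis
    proof cases
      case 1
      then have "pred_mod p y = 0" "y \<noteq> p - 1" using p by (auto simp: pred_eq)
      then show ?thesis using nu[OF y] 1 a0 b1 dc by (simp add: abs_if split: if_splits; linarith)
    next
      case 2
      then have "succ_mod p y = 0" "y \<noteq> 1" using p y by (auto simp: succ_eq)
      then show ?thesis using nu[OF y] 2 a0 b2 dc by (simp add: abs_if split: if_splits; linarith)
    next
      case 3
      then show ?thesis using nu[OF y] b1 b2 by (simp add: abs_if split: if_splits; linarith)
    qed
  qed
  ultimately show ?thesis unfolding invS_def \<nu>_def c_def by (simp add: mult.commute)
qed

theorem claim3p4:
  fixes p :: nat and \<epsilon> :: real and \<mu>0 :: "nat \<Rightarrow> real"
  assumes "0 < \<epsilon>" and "\<epsilon> < 1/2" and "p \<ge> 3"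
    and "\<mu>0 \<in> S_N p \<epsilon>"
  shows "stable p ((1 + 2 * \<epsilon>) / (1 - 2 * \<epsilon>)) (Qfam p \<epsilon>) \<mu>0"
  unfolding stable_def
proof (intro allI impI)
  fix Ks :: "nat \<Rightarrow> kernel" and n x
  assume Ks: "\<forall>i\<ge>1. Ks i \<in> Qfam p \<epsilon>" and x: "x < p"
  have i0: "invS p \<epsilon> \<mu>0" using assms(4) unfolding S_N_def invS_def by blast
  have iv: "invS p \<epsilon> (evol p \<mu>0 Ks n)"
  proof (induction n)
    case 0 then show ?case using i0 by simp
  next
    case (Suc n)
    from Ks have "Ks (Suc n) \<in> Qfam p \<epsilon>" by simp
    then obtain \<delta> where "Ks (Suc n) = Q_delta p \<delta>" "\<bar>\<delta>\<bar> \<le> \<epsilon>"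
      unfolding Qfam_def by auto
    then show ?case using step[OF Suc.IH _ assms(3)] by simp
  qed
  have pp: "real p > 0" using assms(3) by simp
  have range: "(1 - 2*\<epsilon>) / p \<le> \<mu> x \<and> \<mu> x \<le> (1 + 2*\<epsilon>) / p" if "invS p \<epsilon> \<mu>" for \<mu>
  proof -
    have "\<bar>\<mu> x - 1 / real p\<bar> \<le> 2 * \<epsilon> / real p" using that x unfolding invS_def by blast
    then show ?thesis by (simp add: diff_divide_distrib add_divide_distrib abs_le_iff)
  qed
  note r0 = range[OF i0] and rn = range[OF iv]
  have lpos: "(1 - 2*\<epsilon>) / p > 0" using assms(2) pp by simp
  have up: "evol p \<mu>0 Ks n x / \<mu>0 x \<le> ((1 + 2*\<epsilon>) / p) / ((1 - 2*\<epsilon>) / p)"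
    apply (rule frac_le) using r0 rn lpos by linarith+
  have lo: "((1 - 2*\<epsilon>) / p) / ((1 + 2*\<epsilon>) / p) \<le> evol p \<mu>0 Ks n x / \<mu>0 x"
    apply (rule frac_le) using r0 rn lpos by linarith+
  have e1: "((1 + 2*\<epsilon>) / p) / ((1 - 2*\<epsilon>) / p) = (1 + 2 * \<epsilon>) / (1 - 2 * \<epsilon>)"
    using pp assms(2) by (simp add: field_simps)
  have e2: "((1 - 2*\<epsilon>) / p) / ((1 + 2*\<epsilon>) / p) = 1 / ((1 + 2 * \<epsilon>) / (1 - 2 * \<epsilon>))"
  proof -
    have "1 + 2*\<epsilon> \<noteq> 0" "1 - 2*\<epsilon> \<noteq> 0" using assms(1,2) by auto
    have g: "x / real p / (y / real p) = x / y" for x y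
      by (cases "y = 0") (use pp in \<open>simp_all add: field_simps\<close>)
    show ?thesis using pp by (simp add: g)
  qed
  show "1 / ((1 + 2 * \<epsilon>) / (1 - 2 * \<epsilon>)) \<le> evol p \<mu>0 Ks n x / \<mu>0 x \<and>
        evol p \<mu>0 Ks n x / \<mu>0 x \<le> (1 + 2 * \<epsilon>) / (1 - 2 * \<epsilon>)"
    using up lo unfolding e1 e2 by simp
qed

end
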